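(* Let $p$ be a prime and $t\geq 1$. Let $H=H^{t_1,\dots,t_s}$ be a $\mathbb{Z}_{p^s}$-linear GH code of length $p^t$ which is nonlinear (i.e. not a linear subspace of $\mathbb{Z}_p^{p^t}$). If $s\in\{\lfloor (t+1)/2\rfloor+1,\dots,t+1\}$, then there is a $\mathbb{Z}_{p^{s'}}$-linear GH code of length $p^t$, with $s'\in\{2,\dots,\lfloor (t+1)/2\rfloor\}$, that is equivalent to $H$.
   Context: For $s\geq 1$ and $u\in\mathbb{Z}_{p^s}$ with $p$-ary expansion $u=\sum_{i=0}^{s-1}u_ip^i$, the Gray map $\phi_s:\mathbb{Z}_{p^s}\to\mathbb{Z}_p^{p^{s-1}}$ is $\phi_s(u)=(u_{s-1},\dots,u_{s-1})+(u_0,\dots,u_{s-2})Y_{s-1}$, where $Y_{s-1}$ is an $(s-1)\times p^{s-1}$ matrix whose columns are the elements of $\mathbb{Z}_p^{s-1}$; $\phi_1$ is the identity, and $\Phi_s$ applies $\phi_s$ coordinatewise. With $T_i=\{jp^{i-1}:0\le j\le p^{s-i+1}-1\}\subseteq\mathbb{Z}_{p^s}$, for nonnegative integers $t_1\ge1,t_2,\dots,t_s$, $A^{t_1,\dots,t_s}$ is the matrix over $\mathbb{Z}_{p^s}$ whose columns are all $\mathbf{z}^T$, $\mathbf{z}\in\{1\}\times T_1^{t_1-1}\times T_2^{t_2}\times\cdots\times T_s^{t_s}$; $\mathcal{H}^{t_1,\dots,t_s}$ is the subgroup generated by its rows, and $H^{t_1,\dots,t_s}=\Phi_s(\mathcal{H}^{t_1,\dots,t_s})$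 is a $\mathbb{Z}_{p^s}$-linear GH code; its length is $p^t$ with $t=\sum_{i=1}^s(s-i+1)t_i-1$. Codes $C_1,C_2\subseteq\mathbb{Z}_p^N$ are equivalent if $C_2=\{\mathbf{a}+\pi(\mathbf{c}):\mathbf{c}\in C_1\}$ for some vector $\mathbf{a}$ and coordinate permutation $\pi$. *)

theory Defs
  imports Main "HOL-Computational_Algebra.Primes"
begin

(* Vectors over Z_p / Z_{p^s} are nat lists with entries in {0..<p} / {0..<p^s}.
   Parameters t_1,...,t_s are given as a list ts with ts!(i-1) = t_i, s = length ts. *)

(* Gray map phi_s : Z_{p^s} -> Z_p^{p^(s-1)}; column j of Y_{s-1} is the p-ary digit
   vector of j, i.e. its (i+1)-th entry is (j div p^i) mod p. *)
definition gray :: "nat \<Rightarrow> nat \<Rightarrow> nat \<Rightarrow> nat list" where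
  "gray p s u = map (\<lambda>j. (u div p ^ (s - 1)
        + (\<Sum>i<s - 1. (u div p ^ i mod p) * (j div p ^ i mod p))) mod p) [0..<p ^ (s - 1)]"

definition Gray :: "nat \<Rightarrow> nat \<Rightarrow> nat list \<Rightarrow> nat list" where
  "Gray p s v = concat (map (gray p s) v)"

definition T_list :: "nat \<Rightarrow> nat \<Rightarrow> nat \<Rightarrow> nat list" where
  "T_list p s i = map (\<lambda>j. j * p ^ (i - 1)) [0..<p ^ (s - i + 1)]"

(* the columns of A^{t_1,...,t_s}: all vectors in {1} x T_1^(t_1-1) x T_2^t_2 x ... x T_s^t_s *)
definition GH_columns :: "nat \<Rightarrow> nat list \<Rightarrow> nat list list" where
  "GH_columns p ts = (let s = length ts in
     map ((#) 1) (product_lists (concat (map (\<lambda>i.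
        replicate (if i = 0 then ts ! 0 - 1 else ts ! i) (T_list p s (i + 1))) [0..<s]))))"

(* the subgroup of Z_{p^s}^n generated by the rows of A^{t_1,...,t_s}:
   all integer linear combinations of the rows, reduced mod p^s *)
definition GH_Zcode :: "nat \<Rightarrow> nat list \<Rightarrow> nat list set" where
  "GH_Zcode p ts = (let s = length ts in
     {map (\<lambda>z. nat ((\<Sum>k<length z. c k * int (z ! k)) mod int (p ^ s))) (GH_columns p ts)
      | c :: nat \<Rightarrow> int. True})"

definition GH_code :: "nat \<Rightarrow> nat list \<Rightarrow> nat list set" where
  "GH_code p ts = Gray p (length ts) ` GH_Zcode p ts"

(* t = sum_{i=1}^s (s-i+1) t_i - 1, so that the length is p^t *)
definition GH_t :: "nat list \<Rightarrow> nat" where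
  "GH_t ts = (\<Sum>i<length ts. (length ts - i) * ts ! i) - 1"

definition vecs :: "nat \<Rightarrow> nat \<Rightarrow> nat list set" where
  "vecs p N = {v. length v = N \<and> set v \<subseteq> {..<p}}"

definition linear_code :: "nat \<Rightarrow> nat \<Rightarrow> nat list set \<Rightarrow> bool" where
  "linear_code p N C \<longleftrightarrow> C \<subseteq> vecs p N \<and> replicate N 0 \<in> C
     \<and> (\<forall>x\<in>C. \<forall>y\<in>C. map2 (\<lambda>a b. (a + b) mod p) x y \<in> C)
     \<and> (\<forall>k<p. \<forall>x\<in>C. map (\<lambda>a. (k * a) mod p) x \<in> C)"

definition equivalent_codes :: "nat \<Rightarrow> nat \<Rightarrow> nat list set \<Rightarrow> nat list set \<Rightarrow> bool" where
  "equivalent_codes p N C1 C2 \<longleftrightarrow> (\<exists>a \<pi>. a \<in> vecs p N \<and> bij_betw \<pi> {..<N} {..<N} \<and>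
     C2 = (\<lambda>c. map (\<lambda>j. (a ! j + c ! (\<pi> j)) mod p) [0..<N]) ` C1)"

end

theory Submission
  imports Defs
begin


definition perm_img :: "nat \<Rightarrow> (nat \<Rightarrow> nat) \<Rightarrow> nat list \<Rightarrow> nat list" where
  "perm_img N \<pi> c = map (\<lambda>j. c ! (\<pi> j)) [0..<N]"

definition perm_equiv :: "nat \<Rightarrow> nat list set \<Rightarrow> nat list set \<Rightarrow> bool" where
  "perm_equiv N C1 C2 \<longleftrightarrow> (\<exists>\<pi>. bij_betw \<pi> {..<N} {..<N} \<and> C2 = perm_img N \<pi> ` C1)"

lemma perm_equiv_trans:
  assumes "perm_equiv N A B" "perm_equiv N B C" shows "perm_equiv N A C"
proof -
  obtain \<pi>1 where p1: "bij_betw \<pi>1 {..<N} {..<N}" "B = perm_img N \<pi>1 ` A"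
    using assms(1) unfolding perm_equiv_def by blast
  obtain \<pi>2 where p2: "bij_betw \<pi>2 {..<N} {..<N}" "C = perm_img N \<pi>2 ` B"
    using assms(2) unfolding perm_equiv_def by blast
  have "perm_img N \<pi>2 (perm_img N \<pi>1 c) = perm_img N (\<pi>1 \<circ> \<pi>2) c" for c
  proof -
    have "\<pi>2 j < N" if "j < N" for j using p2(1) that unfolding bij_betw_def by auto
    then show ?thesis unfolding perm_img_def by (auto intro!: nth_equalityI)
  qed
  then have "C = perm_img N (\<pi>1 \<circ> \<pi>2) ` A" using p1(2) p2(2) by (auto simp: image_image)
  moreover have "bij_betw (\<pi>1 \<circ> \<pi>2) {..<N} {..<N}" using p1(1) p2(1) by (rule bij_betw_trans[rotated])
  ultimately show ?thesis unfolding perm_equiv_def by blast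
qed

lemma perm_img_inj:
  assumes "bij_betw \<pi> {..<N} {..<N}" "length x = N" "length z = N"
    "perm_img N \<pi> x = perm_img N \<pi> z"
  shows "x = z"
proof (rule nth_equalityI)
  show "length x = length z" using assms by simp
  fix i assume "i < length x"
  then obtain j where "j < N" "i = \<pi> j" using assms(1,2) unfolding bij_betw_def by auto
  then show "x ! i = z ! i" using arg_cong[OF assms(4), of "\<lambda>l. l ! j"]
    unfolding perm_img_def by simp
qed

lemma perm_equiv_linear:
  assumes "perm_equiv N C1 C2" "linear_code p N C2" "C1 \<subseteq> vecs p N" "p > 0"
  shows "linear_code p N C1"
proof -
  obtain \<pi> where pi: "bij_betw \<pi> {..<N} {..<N}" "C2 = perm_img N \<pi> ` C1"
    using assms(1) unfolding perm_equiv_def by blast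
  have lt: "\<pi> j < N" if "j < N" for j using pi(1) that unfolding bij_betw_def by auto
  have inj: "x = z" if "x \<in> vecs p N" "z \<in> vecs p N" "perm_img N \<pi> x = perm_img N \<pi> z" for x z
    using perm_img_inj[OF pi(1)] that unfolding vecs_def by auto
  have L: "linear_code p N C2" by fact
  show ?thesis unfolding linear_code_def
  proof (intro conjI ballI allI impI)
    show "C1 \<subseteq> vecs p N" by fact
    have "perm_img N \<pi> (replicate N 0) = replicate N 0" unfolding perm_img_def
      using lt by (auto intro!: nth_equalityI)
    then have "perm_img N \<pi> (replicate N 0) \<in> C2" using L unfolding linear_code_def by simp
    then obtain z where z: "z \<in> C1" "perm_img N \<pi> z = perm_img N \<pi> (replicate N 0)"
      using pi(2) by auto
    moreover have "replicate N 0 \<in> vecs p N"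
      unfolding vecs_def using assms(4) by (auto simp: in_set_replicate)
    moreover have "z \<in> vecs p N" using z(1) assms(3) by auto
    ultimately have "z = replicate N 0" using inj by blast
    with z show "replicate N 0 \<in> C1" by simp
  next
    fix x y assume xy: "x \<in> C1" "y \<in> C1"
    have lx: "length x = N" "length y = N" using xy assms(3) by (auto simp: vecs_def)
    have "map2 (\<lambda>a b. (a + b) mod p) (perm_img N \<pi> x) (perm_img N \<pi> y) \<in> C2"
      using L xy pi(2) unfolding linear_code_def by blast
    moreover have "map2 (\<lambda>a b. (a + b) mod p) (perm_img N \<pi> x) (perm_img N \<pi> y)
      = perm_img N \<pi> (map2 (\<lambda>a b. (a + b) mod p) x y)"
      unfolding perm_img_def using lt lx by (auto intro!: nth_equalityI)
    ultimately obtain z where z: "z \<in> C1" "perm_img N \<pi> z = perm_img N \<pi> (map2 (\<lambda>a b. (a + b) mod p) x y)"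
      using pi(2) by auto
    have "map2 (\<lambda>a b. (a + b) mod p) x y \<in> vecs p N"
    proof -
      show ?thesis using lx assms(4) unfolding vecs_def by (auto simp: set_zip)
    qed
    then have "z = map2 (\<lambda>a b. (a + b) mod p) x y" using inj z assms(3) by auto
    with z show "map2 (\<lambda>a b. (a + b) mod p) x y \<in> C1" by simp
  next
    fix k x assume kx: "k < p" "x \<in> C1"
    have lx: "length x = N" using kx assms(3) by (auto simp: vecs_def)
    have "map (\<lambda>a. (k * a) mod p) (perm_img N \<pi> x) \<in> C2"
      using L kx pi(2) unfolding linear_code_def by blast
    moreover have "map (\<lambda>a. (k * a) mod p) (perm_img N \<pi> x) = perm_img N \<pi> (map (\<lambda>a. (k * a) mod p) x)"
      unfolding perm_img_def using lt lx by (auto intro!: nth_equalityI)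
    ultimately obtain z where z: "z \<in> C1" "perm_img N \<pi> z = perm_img N \<pi> (map (\<lambda>a. (k * a) mod p) x)"
      using pi(2) by auto
    have "map (\<lambda>a. (k * a) mod p) x \<in> vecs p N" using lx kx unfolding vecs_def by auto
    then have "z = map (\<lambda>a. (k * a) mod p) x" using inj z assms(3) by auto
    with z show "map (\<lambda>a. (k * a) mod p) x \<in> C1" by simp
  qed
qed

lemma perm_equiv_equivalent:
  assumes "perm_equiv N C1 C2" "C1 \<subseteq> vecs p N" "p > 0"
  shows "equivalent_codes p N C1 C2"
proof -
  obtain \<pi> where pi: "bij_betw \<pi> {..<N} {..<N}" "C2 = perm_img N \<pi> ` C1"
    using assms(1) unfolding perm_equiv_def by blast
  have lt: "\<pi> j < N" if "j < N" for j using pi(1) that unfolding bij_betw_def by auto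
  have "(\<lambda>c. map (\<lambda>j. (replicate N 0 ! j + c ! (\<pi> j)) mod p) [0..<N]) ` C1 = perm_img N \<pi> ` C1"
  proof (rule image_cong[OF refl])
    fix c assume "c \<in> C1"
    then have "length c = N" "set c \<subseteq> {..<p}" using assms(2) by (auto simp: vecs_def)
    then show "map (\<lambda>j. (replicate N 0 ! j + c ! (\<pi> j)) mod p) [0..<N] = perm_img N \<pi> c"
      unfolding perm_img_def using lt by (auto intro!: nth_equalityI simp: subset_iff)
  qed
  moreover have "replicate N 0 \<in> vecs p N"
    unfolding vecs_def using assms(3) by (auto simp: in_set_replicate)
  ultimately show ?thesis unfolding equivalent_codes_def using pi(1,2)
    by (intro exI[of _ "replicate N 0"] exI[of _ \<pi>]) simp
qed



lemma coord_equiv: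
  fixes L1 :: "'a list" and L2 :: "'b list" and F1 :: "'c \<Rightarrow> 'a \<Rightarrow> nat" and F2 :: "'d \<Rightarrow> 'b \<Rightarrow> nat"
  assumes d1: "distinct L1" and d2: "distinct L2" and rho: "bij_betw \<rho> (set L1) (set L2)"
    and len: "length L1 = N"
    and cd: "\<And>c. \<exists>d. \<forall>x\<in>set L1. F2 d (\<rho> x) = F1 c x"
    and dc: "\<And>d. \<exists>c. \<forall>x\<in>set L1. F2 d (\<rho> x) = F1 c x"
  shows "perm_equiv N (range (\<lambda>c. map (F1 c) L1)) (range (\<lambda>d. map (F2 d) L2))"
proof -
  have len2: "length L2 = N"
    using bij_betw_same_card[OF rho] d1 d2 len by (simp add: distinct_card)
  have b1: "bij_betw ((!) L1) {..<N} (set L1)" using bij_betw_nth[OF d1] len by auto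
  have b2: "bij_betw ((!) L2) {..<N} (set L2)" using bij_betw_nth[OF d2] len2 by auto
  define \<pi> where "\<pi> = inv_into {..<N} ((!) L1) \<circ> (inv_into (set L1) \<rho> \<circ> (!) L2)"
  have bp: "bij_betw \<pi> {..<N} {..<N}" unfolding \<pi>_def
    by (rule bij_betw_trans[OF bij_betw_trans[OF b2 bij_betw_inv_into[OF rho]] bij_betw_inv_into[OF b1]])
  have key: "L1 ! (\<pi> j) = inv_into (set L1) \<rho> (L2 ! j)" "\<pi> j < N"
    "inv_into (set L1) \<rho> (L2 ! j) \<in> set L1"  if "j < N" for j
  proof -
    have m: "L2 ! j \<in> set L2" using that len2 by simp
    then have m1: "inv_into (set L1) \<rho> (L2 ! j) \<in> set L1"
      using rho by (metis bij_betw_def inv_into_into)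
    then show "L1 ! (\<pi> j) = inv_into (set L1) \<rho> (L2 ! j)" unfolding \<pi>_def
      using b1 by (simp add: bij_betw_def f_inv_into_f)
    show "\<pi> j < N" using bp that unfolding bij_betw_def by auto
    show "inv_into (set L1) \<rho> (L2 ! j) \<in> set L1" by fact
  qed
  have rr: "\<rho> (inv_into (set L1) \<rho> y) = y" if "y \<in> set L2" for y
    using rho that by (simp add: bij_betw_def f_inv_into_f)
  have eq: "perm_img N \<pi> (map (F1 c) L1) = map (F2 d) L2"
    if h: "\<forall>x\<in>set L1. F2 d (\<rho> x) = F1 c x" for c d
  proof (rule nth_equalityI)
    show "length (perm_img N \<pi> (map (F1 c) L1)) = length (map (F2 d) L2)"
      unfolding perm_img_def using len2 by simp
    fix j assume "j < length (perm_img N \<pi> (map (F1 c) L1))"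
    then have j: "j < N" unfolding perm_img_def by simp
    have "perm_img N \<pi> (map (F1 c) L1) ! j = F1 c (L1 ! (\<pi> j))"
      unfolding perm_img_def using j key(2)[OF j] len by simp
    also have "\<dots> = F1 c (inv_into (set L1) \<rho> (L2 ! j))" using key(1)[OF j] by simp
    also have "\<dots> = F2 d (\<rho> (inv_into (set L1) \<rho> (L2 ! j)))" using h key(3)[OF j] by simp
    also have "\<dots> = F2 d (L2 ! j)" using rr j len2 by simp
    finally show "perm_img N \<pi> (map (F1 c) L1) ! j = map (F2 d) L2 ! j" using j len2 by simp
  qed
  have "range (\<lambda>d. map (F2 d) L2) = perm_img N \<pi> ` range (\<lambda>c. map (F1 c) L1)"
  proof
    show "range (\<lambda>d. map (F2 d) L2) \<subseteq> perm_img N \<pi> ` range (\<lambda>c. map (F1 c) L1)"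
    proof
      fix v assume "v \<in> range (\<lambda>d. map (F2 d) L2)"
      then obtain d where v: "v = map (F2 d) L2" by auto
      obtain c where "\<forall>x\<in>set L1. F2 d (\<rho> x) = F1 c x" using dc by blast
      then have vv: "v = perm_img N \<pi> (map (F1 c) L1)" using eq v by simp
      have "map (F1 c) L1 \<in> range (\<lambda>c. map (F1 c) L1)" by (rule rangeI)
      then show "v \<in> perm_img N \<pi> ` range (\<lambda>c. map (F1 c) L1)" by (rule image_eqI[where f="perm_img N \<pi>" and x="map (F1 c) L1", OF vv])
    qed
  next
    show "perm_img N \<pi> ` range (\<lambda>c. map (F1 c) L1) \<subseteq> range (\<lambda>d. map (F2 d) L2)"
    proof
      fix v assume "v \<in> perm_img N \<pi> ` range (\<lambda>c. map (F1 c) L1)"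
      then obtain c where v: "v = perm_img N \<pi> (map (F1 c) L1)" by auto
      obtain d where "\<forall>x\<in>set L1. F2 d (\<rho> x) = F1 c x" using cd by blast
      then have "v = map (F2 d) L2" using eq v by simp
      then show "v \<in> range (\<lambda>d. map (F2 d) L2)" using rangeI[of "\<lambda>d. map (F2 d) L2" d] by simp
    qed
  qed
  then show ?thesis unfolding perm_equiv_def using bp by blast
qed



definition blocks :: "nat \<Rightarrow> nat list \<Rightarrow> nat list list" where
  "blocks p ts = concat (map (\<lambda>i. replicate (if i = 0 then ts ! 0 - 1 else ts ! i)
        (T_list p (length ts) (i + 1))) [0..<length ts])"

lemma GH_columns_blocks: "GH_columns p ts = map ((#) 1) (product_lists (blocks p ts))"
  unfolding GH_columns_def blocks_def Let_def by simp

definition coords :: "nat \<Rightarrow> nat list \<Rightarrow> (nat list \<times> nat) list" where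
  "coords p ts = concat (map (\<lambda>z. map (\<lambda>y. (z, y)) [0..<p ^ (length ts - 1)]) (GH_columns p ts))"

definition Fv :: "nat \<Rightarrow> nat \<Rightarrow> (nat \<Rightarrow> int) \<Rightarrow> nat list \<times> nat \<Rightarrow> nat" where
  "Fv p s c zy = (case zy of (z, y) \<Rightarrow>
     (let u = nat ((\<Sum>k<length z. c k * int (z ! k)) mod int (p ^ s)) in
      (u div p ^ (s - 1) + (\<Sum>i<s - 1. (u div p ^ i mod p) * (y div p ^ i mod p))) mod p))"

lemma GH_code_rep: "GH_code p ts = range (\<lambda>c. map (Fv p (length ts) c) (coords p ts))"
proof -
  have "GH_Zcode p ts = range (\<lambda>c. map (\<lambda>z. nat ((\<Sum>k<length z. c k * int (z ! k)) mod int (p ^ length ts))) (GH_columns p ts))"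
    unfolding GH_Zcode_def Let_def by auto
  then have "GH_code p ts = range (\<lambda>c. Gray p (length ts) (map (\<lambda>z. nat ((\<Sum>k<length z. c k * int (z ! k)) mod int (p ^ length ts))) (GH_columns p ts)))"
    unfolding GH_code_def by (simp add: image_image)
  also have "\<dots> = range (\<lambda>c. map (Fv p (length ts) c) (coords p ts))"
    unfolding Gray_def gray_def coords_def Fv_def
    by (simp add: map_concat comp_def Let_def)
  finally show ?thesis .
qed



definition red :: "nat list \<Rightarrow> nat list" where
  "red ts = map (\<lambda>i. ts ! Suc i + (if i = 0 then 1 else 0) + (if i = length ts - 2 then 1 else 0))
     [0..<length ts - 1]"

lemma T_list_div:
  assumes "p > 0" "i + 2 \<le> s"
  shows "map (\<lambda>x. x div p) (T_list p s (i + 2)) = T_list p (s - 1) (i + 1)"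
proof -
  have e: "s - (i + 2) + 1 = s - 1 - (i + 1) + 1" using assms by simp
  have "j * p ^ (i + 1) div p = j * p ^ i" for j using assms(1) by simp
  then show ?thesis unfolding T_list_def using e by (simp add: comp_def)
qed

lemma concat_incr_last:
  assumes "m \<ge> 1"
  shows "concat (map (\<lambda>i. replicate (g i + (if i = m - 1 then 1 else 0)) (T i)) [0..<m])
       = concat (map (\<lambda>i. replicate (g i) (T i)) [0..<m]) @ [T (m - 1)]"
proof -
  obtain k where m: "m = Suc k" using assms by (cases m) auto
  have "concat (map (\<lambda>i. replicate (g i + (if i = k then 1 else 0)) (T i)) [0..<k])
      = concat (map (\<lambda>i. replicate (g i) (T i)) [0..<k])"
    by (intro arg_cong[where f=concat] map_cong) auto
  then show ?thesis unfolding m by (simp add: replicate_append_same[symmetric])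
qed

lemma blocks_red:
  assumes "length ts \<ge> 2" "ts ! 0 = 1" "p > 0"
  shows "blocks p (red ts) = map (map (\<lambda>x. x div p)) (blocks p ts) @ [T_list p (length ts - 1) (length ts - 1)]"
proof -
  define m where "m = length ts - 1"
  have s: "length ts = Suc m" and m1: "m \<ge> 1" using assms(1) unfolding m_def by auto
  have lr: "length (red ts) = m" unfolding red_def m_def by simp
  have "blocks p ts = concat (map (\<lambda>i. replicate (if i = 0 then ts ! 0 - 1 else ts ! i)
        (T_list p (Suc m) (i + 1))) (0 # map Suc [0..<m]))"
    unfolding blocks_def s by (simp only: upt_conv_Cons map_Suc_upt zero_less_Suc)
  also have "\<dots> = concat (map (\<lambda>i. replicate (ts ! Suc i) (T_list p (Suc m) (i + 2))) [0..<m])"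
    using assms(2) by (simp add: comp_def)
  finally have b: "map (map (\<lambda>x. x div p)) (blocks p ts) =
     concat (map (\<lambda>i. replicate (ts ! Suc i) (T_list p m (i + 1))) [0..<m])"
    using T_list_div[OF assms(3)] by (auto simp: map_concat comp_def intro!: arg_cong[where f=concat] map_cong)
  have "blocks p (red ts) = concat (map (\<lambda>i. replicate (ts ! Suc i + (if i = m - 1 then 1 else 0))
        (T_list p m (i + 1))) [0..<m])"
    unfolding blocks_def lr
    by (intro arg_cong[where f=concat] map_cong refl) (auto simp: red_def m_def)
  also have "\<dots> = concat (map (\<lambda>i. replicate (ts ! Suc i) (T_list p m (i + 1))) [0..<m]) @ [T_list p m m]"
    using concat_incr_last[OF m1, of "\<lambda>i. ts ! Suc i" "\<lambda>i. T_list p m (i + 1)"] m1 by simp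
  finally show ?thesis using b unfolding m_def by simp
qed



definition dg :: "nat \<Rightarrow> nat \<Rightarrow> int \<Rightarrow> int" where
  "dg p i X = X div (int p) ^ i mod int p"

lemma dg_mod:
  assumes "p > 0" "i < s"
  shows "dg p i (X mod int p ^ s) = dg p i X"
proof -
  have ps: "int p ^ s = int p ^ i * int p ^ (s - i)" using assms(2) by (simp add: power_add[symmetric])
  have "X mod (int (p ^ i) * int (p ^ (s - i))) = int (p ^ i) * (X div int (p ^ i) mod int (p ^ (s - i))) + X mod int (p ^ i)"
    by (rule mod_mult2_eq')
  then have "X mod int p ^ s = int p ^ i * (X div int p ^ i mod int p ^ (s - i)) + X mod int p ^ i"
    unfolding ps by simp
  moreover have "(int p ^ i * Y + X mod int p ^ i) div int p ^ i = Y" for Y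
    using assms(1) by (simp add: add.commute)
  ultimately have "X mod int p ^ s div int p ^ i = X div int p ^ i mod int p ^ (s - i)" by simp
  moreover have "int p dvd int p ^ (s - i)" using assms(2) by (simp add: dvd_power)
  ultimately show ?thesis unfolding dg_def by (simp add: mod_mod_cancel)
qed

lemma dg_add_pow:
  assumes "p > 0"
  shows "dg p i (V + K * int p ^ i) = (dg p i V + K) mod int p"
proof -
  have "(V + K * int p ^ i) div int p ^ i = V div int p ^ i + K" using assms by simp
  then show ?thesis unfolding dg_def by (simp add: mod_add_left_eq)
qed

lemma dg_add_pow_Suc:
  assumes "p > 0"
  shows "dg p i (V + K * int p ^ Suc i) = dg p i V"
proof -
  have "V + K * int p ^ Suc i = V + (K * int p) * int p ^ i" by (simp add: algebra_simps)
  then show ?thesis using dg_add_pow[OF assms, of i V "K * int p"]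
    by (simp add: dg_def mult.assoc)
qed

lemma dg_shift:
  assumes "p > 0" "0 \<le> a" "a < int p"
  shows "dg p 0 (a + int p * V) = a" "dg p (Suc i) (a + int p * V) = dg p i V"
proof -
  show "dg p 0 (a + int p * V) = a" unfolding dg_def using assms by simp
  have d: "(a + int p * V) div int p = V" using assms by simp
  have "(a + int p * V) div int p ^ Suc i = (a + int p * V) div int p div int p ^ i"
    by (simp add: zdiv_zmult2_eq)
  then show "dg p (Suc i) (a + int p * V) = dg p i V" unfolding dg_def d by simp
qed

lemma Fv_int:
  assumes "p > 0" "s \<ge> 1"
  shows "int (Fv p s c (z, y)) = (dg p (s - 1) (\<Sum>k<length z. c k * int (z ! k))
     + (\<Sum>i<s - 1. dg p i (\<Sum>k<length z. c k * int (z ! k)) * int (y div p ^ i mod p))) mod int p"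
proof -
  define X where "X = (\<Sum>k<length z. c k * int (z ! k))"
  define u where "u = nat (X mod int (p ^ s))"
  have iu: "int u = X mod int p ^ s" unfolding u_def using assms(1) by simp
  have dgu: "int (u div p ^ i mod p) = dg p i X" if "i < s" for i
  proof -
    have "int (u div p ^ i mod p) = int u div int p ^ i mod int p" by (simp add: of_nat_div of_nat_mod)
    also have "\<dots> = dg p i X" unfolding iu using dg_mod[OF assms(1) that] by (simp add: dg_def)
    finally show ?thesis .
  qed
  have "Fv p s c (z, y) = (u div p ^ (s - 1) + (\<Sum>i<s - 1. (u div p ^ i mod p) * (y div p ^ i mod p))) mod p"
    unfolding Fv_def u_def X_def by (simp add: Let_def)
  also have "\<dots> = (u div p ^ (s - 1) mod p + (\<Sum>i<s - 1. (u div p ^ i mod p) * (y div p ^ i mod p))) mod p"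
    by (simp add: mod_add_left_eq)
  finally have "int (Fv p s c (z, y)) = (int (u div p ^ (s - 1) mod p) + (\<Sum>i<s - 1. int (u div p ^ i mod p) * int (y div p ^ i mod p))) mod int p"
    by (simp add: of_nat_mod of_nat_sum)
  also have "\<dots> = (dg p (s - 1) X + (\<Sum>i<s - 1. dg p i X * int (y div p ^ i mod p))) mod int p"
  proof -
    have "(\<Sum>i<s - 1. int (u div p ^ i mod p) * int (y div p ^ i mod p)) = (\<Sum>i<s - 1. dg p i X * int (y div p ^ i mod p))"
      by (rule sum.cong) (use dgu in auto)
    moreover have "int (u div p ^ (s - 1) mod p) = dg p (s - 1) X" using dgu assms(2) by simp
    ultimately show ?thesis by simp
  qed
  finally show ?thesis unfolding X_def .
qed



lemma FL:
  assumes p: "p > 0" and m: "m \<ge> 1" and mult: "\<forall>k<length w. p dvd w ! k"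
  shows "int (Fv p (Suc m) c (1 # w, y)) =
    (dg p (m - 1) (c 0 div int p + (\<Sum>k<length w. c (Suc k) * int (w ! k div p)))
     + (c 0 mod int p) * int (y mod p)
     + (\<Sum>i<m - 1. dg p i (c 0 div int p + (\<Sum>k<length w. c (Suc k) * int (w ! k div p))) * int (y div p div p ^ i mod p))) mod int p"
proof -
  define V where "V = c 0 div int p + (\<Sum>k<length w. c (Suc k) * int (w ! k div p))"
  define a where "a = c 0 mod int p"
  have X: "(\<Sum>k<length (1 # w). c k * int ((1 # w) ! k)) = a + int p * V"
  proof -
    have "(\<Sum>k<length (1 # w). c k * int ((1 # w) ! k)) = c 0 + (\<Sum>k<length w. c (Suc k) * int (w ! k))"
      by (simp add: sum.lessThan_Suc_shift del: sum.lessThan_Suc)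
    also have "(\<Sum>k<length w. c (Suc k) * int (w ! k)) = int p * (\<Sum>k<length w. c (Suc k) * int (w ! k div p))"
      unfolding sum_distrib_left
    proof (rule sum.cong[OF refl])
      fix k assume "k \<in> {..<length w}"
      then have "w ! k = p * (w ! k div p)" using mult by auto
      then have "int (w ! k) = int p * int (w ! k div p)" by (metis of_nat_mult)
      then show "c (Suc k) * int (w ! k) = int p * (c (Suc k) * int (w ! k div p))" by simp
    qed
    also have "c 0 = a + int p * (c 0 div int p)" unfolding a_def by simp
    finally show ?thesis unfolding V_def by (simp add: algebra_simps)
  qed
  have a: "0 \<le> a" "a < int p" unfolding a_def using p by auto
  obtain r where r: "m = Suc r" using m by (cases m) auto
  have "int (Fv p (Suc m) c (1 # w, y)) = (dg p m (a + int p * V)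
     + (\<Sum>i<m. dg p i (a + int p * V) * int (y div p ^ i mod p))) mod int p"
    using Fv_int[OF p, of "Suc m" c "1 # w" y] X by simp
  also have "(\<Sum>i<m. dg p i (a + int p * V) * int (y div p ^ i mod p)) =
     a * int (y mod p) + (\<Sum>i<r. dg p i V * int (y div p div p ^ i mod p))"
    unfolding r sum.lessThan_Suc_shift using dg_shift[OF p a] by (simp add: div_mult2_eq)
  also have "dg p m (a + int p * V) = dg p r V" unfolding r using dg_shift[OF p a] by simp
  finally show ?thesis unfolding r V_def[symmetric] a_def[symmetric] by (simp add: algebra_simps)
qed

lemma FR:
  assumes p: "p > 0" and m: "m \<ge> 1"
  shows "int (Fv p m d (1 # (map (\<lambda>x. x div p) w @ [(y mod p) * p ^ (m - 1)]), y div p)) =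
    ((dg p (m - 1) (d 0 + (\<Sum>k<length w. d (Suc k) * int (w ! k div p))) + d (Suc (length w)) * int (y mod p)) mod int p
     + (\<Sum>i<m - 1. dg p i (d 0 + (\<Sum>k<length w. d (Suc k) * int (w ! k div p))) * int (y div p div p ^ i mod p))) mod int p"
proof -
  define V where "V = d 0 + (\<Sum>k<length w. d (Suc k) * int (w ! k div p))"
  define K where "K = d (Suc (length w)) * int (y mod p)"
  have X: "(\<Sum>k<length (1 # (map (\<lambda>x. x div p) w @ [(y mod p) * p ^ (m - 1)])).
      d k * int ((1 # (map (\<lambda>x. x div p) w @ [(y mod p) * p ^ (m - 1)])) ! k)) = V + K * int p ^ (m - 1)"
  proof -
    have "(\<Sum>k<length (1 # (map (\<lambda>x. x div p) w @ [(y mod p) * p ^ (m - 1)])).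
      d k * int ((1 # (map (\<lambda>x. x div p) w @ [(y mod p) * p ^ (m - 1)])) ! k))
      = d 0 + (\<Sum>k<Suc (length w). d (Suc k) * int ((map (\<lambda>x. x div p) w @ [(y mod p) * p ^ (m - 1)]) ! k))"
      by (simp add: sum.lessThan_Suc_shift del: sum.lessThan_Suc)
    also have "\<dots> = d 0 + (\<Sum>k<length w. d (Suc k) * int (w ! k div p)) + K * int p ^ (m - 1)"
      unfolding K_def by (simp add: nth_append)
    finally show ?thesis unfolding V_def by simp
  qed
  have "int (Fv p m d (1 # (map (\<lambda>x. x div p) w @ [(y mod p) * p ^ (m - 1)]), y div p)) =
     (dg p (m - 1) (V + K * int p ^ (m - 1))
     + (\<Sum>i<m - 1. dg p i (V + K * int p ^ (m - 1)) * int (y div p div p ^ i mod p))) mod int p"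
    using Fv_int[OF p m, of d] X by simp
  also have "dg p (m - 1) (V + K * int p ^ (m - 1)) = (dg p (m - 1) V + K) mod int p"
    by (rule dg_add_pow[OF p])
  also have "(\<Sum>i<m - 1. dg p i (V + K * int p ^ (m - 1)) * int (y div p div p ^ i mod p))
     = (\<Sum>i<m - 1. dg p i V * int (y div p div p ^ i mod p))"
  proof (rule sum.cong[OF refl])
    fix i assume "i \<in> {..<m - 1}"
    then obtain q where q: "m - 1 = Suc i + q" by (metis add_Suc lessThan_iff less_imp_Suc_add)
    have eq: "V + K * int p ^ (m - 1) = V + (K * int p ^ q) * int p ^ Suc i"
      unfolding q by (simp add: power_add algebra_simps)
    show "dg p i (V + K * int p ^ (m - 1)) * int (y div p div p ^ i mod p) =
          dg p i V * int (y div p div p ^ i mod p)"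
      by (simp only: eq dg_add_pow_Suc[OF p])
  qed
  finally show ?thesis unfolding V_def K_def .
qed



lemma blocks_mem:
  assumes "B \<in> set (blocks p ts)"
  shows "\<exists>i<length ts. B = T_list p (length ts) (i + 1) \<and> (i = 0 \<longrightarrow> ts ! 0 \<ge> 2)"
proof -
  from assms obtain i where i: "i < length ts"
    "B \<in> set (replicate (if i = 0 then ts ! 0 - 1 else ts ! i) (T_list p (length ts) (i + 1)))"
    unfolding blocks_def by auto
  then show ?thesis by (intro exI[of _ i]) (auto split: if_splits)
qed

lemma blocks_mult:
  assumes "ts ! 0 = 1" "B \<in> set (blocks p ts)" "x \<in> set B"
  shows "p dvd x"
proof -
  obtain i where i: "i < length ts" "B = T_list p (length ts) (i + 1)" "i \<noteq> 0"
    using blocks_mem[OF assms(2)] assms(1) by auto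
  then obtain j where "x = j * p ^ i" using assms(3) unfolding T_list_def by auto
  then show ?thesis using i(3) by (simp add: dvd_power)
qed

lemma blocks_distinct:
  assumes "p > 0" "B \<in> set (blocks p ts)"
  shows "distinct B"
proof -
  obtain i where i: "B = T_list p (length ts) (i + 1)" using blocks_mem[OF assms(2)] by auto
  have "inj_on (\<lambda>j. j * p ^ i) X" for X using assms(1) by (auto intro: inj_onI)
  then show ?thesis unfolding i T_list_def by (simp add: distinct_map)
qed

lemma distinct_concat_pair:
  assumes "distinct zs" "distinct Y"
  shows "distinct (concat (map (\<lambda>z. map (\<lambda>y. (z, y)) Y) zs))"
  using assms by (induction zs) (auto simp: distinct_map inj_on_def)

lemma coords_distinct:
  assumes "p > 0"
  shows "distinct (coords p ts)"
proof -
  have "distinct (product_lists (blocks p ts))"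
    using distinct_product_lists blocks_distinct[OF assms] by blast
  then have "distinct (GH_columns p ts)" unfolding GH_columns_blocks by (simp add: distinct_map)
  then show ?thesis unfolding coords_def by (intro distinct_concat_pair) auto
qed

lemma coords_set:
  "(z, y) \<in> set (coords p ts) \<longleftrightarrow>
    (\<exists>w. z = 1 # w \<and> length w = length (blocks p ts) \<and> (\<forall>k<length (blocks p ts). w ! k \<in> set (blocks p ts ! k)))
    \<and> y < p ^ (length ts - 1)"
  unfolding coords_def GH_columns_blocks by (auto simp: product_lists_set list_all2_conv_all_nth)



lemma aux_modsplit: "(A::int) + x * b + S = (A + (x mod q) * b + S) + (x div q * b) * q"
proof -
  have a: "(A::int) + (r + q * k) * b + S = (A + r * b + S) + (k * b) * q" for r k
    by (simp add: algebra_simps)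
  show ?thesis using a[of "x mod q" "x div q"] by simp
qed

lemma step:
  assumes p: "p > 0" and len: "length ts \<ge> 2" and t0: "ts ! 0 = 1"
  shows "perm_equiv (length (coords p ts)) (GH_code p ts) (GH_code p (red ts))"
proof -
  define m where "m = length ts - 1"
  define Bl where "Bl = blocks p ts"
  define n where "n = length Bl"
  define f where "f = (\<lambda>x::nat. x div p)"
  define Tm where "Tm = T_list p m m"
  have m1: "m \<ge> 1" and sm: "length ts = Suc m" using len unfolding m_def by auto
  have lr: "length (red ts) = m" unfolding red_def m_def by simp
  have Bl': "blocks p (red ts) = map (map f) Bl @ [Tm]"
    using blocks_red[OF len t0 p] unfolding Bl_def f_def Tm_def m_def by simp
  have Tm: "e \<in> set Tm \<longleftrightarrow> (\<exists>j<p. e = j * p ^ (m - 1))" for e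
    unfolding Tm_def T_list_def by auto
  have mult: "x = f x * p" if "k < n" "x \<in> set (Bl ! k)" for k x
  proof -
    have "p dvd x" using blocks_mult[OF t0, of "Bl ! k" p x] that unfolding Bl_def n_def by auto
    then show ?thesis unfolding f_def by auto
  qed
  have memL: "(z, y) \<in> set (coords p ts) \<longleftrightarrow>
      (\<exists>w. z = 1 # w \<and> length w = n \<and> (\<forall>k<n. w ! k \<in> set (Bl ! k))) \<and> y < p ^ m" for z y
    using coords_set[of z y p ts] unfolding Bl_def n_def m_def by simp
  have memR: "(z, y) \<in> set (coords p (red ts)) \<longleftrightarrow>
      (\<exists>w e. z = 1 # (w @ [e]) \<and> length w = n \<and> (\<forall>k<n. w ! k \<in> f ` set (Bl ! k)) \<and> e \<in> set Tm)
      \<and> y < p ^ (m - 1)" for z y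
  proof -
    have a: "(\<exists>w'. z = 1 # w' \<and> length w' = Suc n \<and> (\<forall>k<Suc n. w' ! k \<in> set ((map (map f) Bl @ [Tm]) ! k)))
      \<longleftrightarrow> (\<exists>w e. z = 1 # (w @ [e]) \<and> length w = n \<and> (\<forall>k<n. w ! k \<in> f ` set (Bl ! k)) \<and> e \<in> set Tm)"
    proof
      assume "\<exists>w'. z = 1 # w' \<and> length w' = Suc n \<and> (\<forall>k<Suc n. w' ! k \<in> set ((map (map f) Bl @ [Tm]) ! k))"
      then obtain w' where w': "z = 1 # w'" "length w' = Suc n" "\<forall>k<Suc n. w' ! k \<in> set ((map (map f) Bl @ [Tm]) ! k)"
        by blast
      have "w' \<noteq> []" using w'(2) by auto
      then have eqw: "w' = butlast w' @ [last w']" by simp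
      moreover have "length (butlast w') = n" using w'(2) by simp
      moreover have "\<forall>k<n. butlast w' ! k \<in> f ` set (Bl ! k)"
      proof (intro allI impI)
        fix k assume k: "k < n"
        have "w' ! k \<in> set ((map (map f) Bl @ [Tm]) ! k)" using w'(3) k by simp
        moreover have "(map (map f) Bl @ [Tm]) ! k = map f (Bl ! k)" using k by (simp add: nth_append n_def)
        moreover have "butlast w' ! k = w' ! k" using k w'(2) by (simp add: nth_butlast)
        ultimately show "butlast w' ! k \<in> f ` set (Bl ! k)" by simp
      qed
      moreover have "last w' \<in> set Tm"
      proof -
        have "w' \<noteq> []" using w'(2) by auto
        then have "last w' = w' ! n" using w'(2) last_conv_nth[of w'] by simp
        then show ?thesis using w'(3)[rule_format, of n] unfolding n_def by (simp add: nth_append)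
      qed
      ultimately show "\<exists>w e. z = 1 # (w @ [e]) \<and> length w = n \<and> (\<forall>k<n. w ! k \<in> f ` set (Bl ! k)) \<and> e \<in> set Tm"
        using w'(1) by (intro exI[of _ "butlast w'"] exI[of _ "last w'"]) simp
    next
      assume "\<exists>w e. z = 1 # (w @ [e]) \<and> length w = n \<and> (\<forall>k<n. w ! k \<in> f ` set (Bl ! k)) \<and> e \<in> set Tm"
      then obtain w e where we: "z = 1 # (w @ [e])" "length w = n" "\<forall>k<n. w ! k \<in> f ` set (Bl ! k)" "e \<in> set Tm"
        by blast
      have "\<forall>k<Suc n. (w @ [e]) ! k \<in> set ((map (map f) Bl @ [Tm]) ! k)"
      proof (intro allI impI)
        fix k assume "k < Suc n"
        then show "(w @ [e]) ! k \<in> set ((map (map f) Bl @ [Tm]) ! k)"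
          using we unfolding n_def by (cases "k < n") (auto simp: nth_append)
      qed
      then show "\<exists>w'. z = 1 # w' \<and> length w' = Suc n \<and> (\<forall>k<Suc n. w' ! k \<in> set ((map (map f) Bl @ [Tm]) ! k))"
        using we by (intro exI[of _ "w @ [e]"]) simp
    qed
    show ?thesis using coords_set[of z y p "red ts"] a unfolding Bl' lr n_def by simp
  qed
  define \<rho> where "\<rho> = (\<lambda>(z::nat list, y::nat). (1 # (map f (tl z) @ [(y mod p) * p ^ (m - 1)]), y div p))"
  define \<sigma> where "\<sigma> = (\<lambda>(z::nat list, y::nat). (1 # map (\<lambda>x. x * p) (butlast (tl z)), y * p + last z div p ^ (m - 1)))"
  have pm: "p ^ m = p * p ^ (m - 1)" using m1 by (cases m) auto
  have bij: "bij_betw \<rho> (set (coords p ts)) (set (coords p (red ts)))"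
  proof (rule bij_betw_byWitness[where f'=\<sigma>])
    show "\<forall>a\<in>set (coords p ts). \<sigma> (\<rho> a) = a"
    proof
      fix a assume a0: "a \<in> set (coords p ts)"
      obtain z y where az: "a = (z, y)" by (cases a)
      have "(z, y) \<in> set (coords p ts)" using a0 az by simp
      then obtain w where a: "z = 1 # w" "length w = n" "\<forall>k<n. w ! k \<in> set (Bl ! k)" "y < p ^ m"
        unfolding memL by blast
      note a = az a
      have "map (\<lambda>x. x * p) (map f w) = w"
        using a(3,4) mult by (auto intro!: nth_equalityI)
      moreover have "(y mod p) * p ^ (m - 1) div p ^ (m - 1) = y mod p" using p by simp
      ultimately show "\<sigma> (\<rho> a) = a" unfolding a \<rho>_def \<sigma>_def by simp
    qed
    show "\<forall>a\<in>set (coords p (red ts)). \<rho> (\<sigma> a) = a"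
    proof
      fix a assume a0: "a \<in> set (coords p (red ts))"
      obtain z y where az: "a = (z, y)" by (cases a)
      have "(z, y) \<in> set (coords p (red ts))" using a0 az by simp
      then obtain w e where a: "z = 1 # (w @ [e])" "length w = n"
        "\<forall>k<n. w ! k \<in> f ` set (Bl ! k)" "e \<in> set Tm" "y < p ^ (m - 1)"
        unfolding memR by blast
      note a = az a
      obtain j where j: "j < p" "e = j * p ^ (m - 1)" using a(5) Tm by auto
      have "map f (map (\<lambda>x. x * p) w) = w" unfolding f_def using p by (auto intro!: nth_equalityI)
      moreover have "(y * p + j) mod p = j" "(y * p + j) div p = y" using j(1) by auto
      ultimately show "\<rho> (\<sigma> a) = a" unfolding a \<rho>_def \<sigma>_def using j p by simp
    qed
    show "\<rho> ` set (coords p ts) \<subseteq> set (coords p (red ts))"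
    proof
      fix b assume "b \<in> \<rho> ` set (coords p ts)"
      then obtain a where b: "b = \<rho> a" "a \<in> set (coords p ts)" by blast
      obtain z y where az: "a = (z, y)" by (cases a)
      have "(z, y) \<in> set (coords p ts)" using b az by simp
      then obtain w where a: "z = 1 # w" "length w = n" "\<forall>k<n. w ! k \<in> set (Bl ! k)" "y < p ^ m"
        unfolding memL by blast
      note a = az a
      have "\<forall>k<n. map f w ! k \<in> f ` set (Bl ! k)" using a(3,4) by auto
      moreover have "(y mod p) * p ^ (m - 1) \<in> set Tm" using Tm p by auto
      moreover have "y div p < p ^ (m - 1)" using a(5) pm p by (simp add: div_less_iff_less_mult mult.commute)
      ultimately have ex: "(\<exists>w' e. 1 # (map f w @ [(y mod p) * p ^ (m - 1)]) = 1 # (w' @ [e]) \<and> length w' = n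
          \<and> (\<forall>k<n. w' ! k \<in> f ` set (Bl ! k)) \<and> e \<in> set Tm) \<and> y div p < p ^ (m - 1)"
        using a(3) by (intro conjI exI[of _ "map f w"] exI[of _ "(y mod p) * p ^ (m - 1)"]) simp_all
      have bb: "b = (1 # (map f w @ [(y mod p) * p ^ (m - 1)]), y div p)" unfolding b a \<rho>_def by simp
      show "b \<in> set (coords p (red ts))" unfolding bb memR using ex by blast
    qed
    show "\<sigma> ` set (coords p (red ts)) \<subseteq> set (coords p ts)"
    proof
      fix b assume "b \<in> \<sigma> ` set (coords p (red ts))"
      then obtain a where b: "b = \<sigma> a" "a \<in> set (coords p (red ts))" by blast
      obtain z y where az: "a = (z, y)" by (cases a)
      have "(z, y) \<in> set (coords p (red ts))" using b az by simp
      then obtain w e where a: "z = 1 # (w @ [e])" "length w = n"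
        "\<forall>k<n. w ! k \<in> f ` set (Bl ! k)" "e \<in> set Tm" "y < p ^ (m - 1)"
        unfolding memR by blast
      note a = az a
      obtain j where j: "j < p" "e = j * p ^ (m - 1)" using a(5) Tm by auto
      have "\<forall>k<n. map (\<lambda>x. x * p) w ! k \<in> set (Bl ! k)"
      proof (intro allI impI)
        fix k assume k: "k < n"
        then obtain x where x: "x \<in> set (Bl ! k)" "w ! k = f x" using a(4) by blast
        then show "map (\<lambda>x. x * p) w ! k \<in> set (Bl ! k)" using k a(3) mult[OF k x(1)] by simp
      qed
      moreover have "y * p + j < p ^ m"
      proof -
        have "y * p + j < y * p + p" using j(1) by simp
        also have "\<dots> = (y + 1) * p" by simp
        also have "\<dots> \<le> p ^ (m - 1) * p" using a(6) by (intro mult_right_mono) auto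
        finally show ?thesis using pm by (simp add: mult.commute)
      qed
      ultimately have ex: "(\<exists>w'. 1 # map (\<lambda>x. x * p) w = 1 # w' \<and> length w' = n
          \<and> (\<forall>k<n. w' ! k \<in> set (Bl ! k))) \<and> y * p + j < p ^ m"
        using a(3) by (intro conjI exI[of _ "map (\<lambda>x. x * p) w"]) simp_all
      have bb: "b = (1 # map (\<lambda>x. x * p) w, y * p + j)" unfolding b a \<sigma>_def using j p by simp
      show "b \<in> set (coords p ts)" unfolding bb memL using ex by blast
    qed
  qed
  have key: "Fv p m d (\<rho> (1 # w, y)) = Fv p (Suc m) c (1 # w, y)"
    if w: "length w = n" "\<forall>k<n. p dvd w ! k" and cd: "d 0 = c 0 div int p" "\<forall>k<n. d (Suc k) = c (Suc k)"
      "d (Suc n) mod int p = c 0 mod int p" for c d w y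
  proof -
    have r: "\<rho> (1 # w, y) = (1 # (map (\<lambda>x. x div p) w @ [(y mod p) * p ^ (m - 1)]), y div p)"
      unfolding \<rho>_def f_def by simp
    define V where "V = c 0 div int p + (\<Sum>k<length w. c (Suc k) * int (w ! k div p))"
    have V: "d 0 + (\<Sum>k<length w. d (Suc k) * int (w ! k div p)) = V"
    proof -
      have "(\<Sum>k<length w. d (Suc k) * int (w ! k div p)) = (\<Sum>k<length w. c (Suc k) * int (w ! k div p))"
        by (rule sum.cong) (use cd(2) w(1) in auto)
      then show ?thesis unfolding V_def using cd(1) by simp
    qed
    define S where "S = (\<Sum>i<m - 1. dg p i V * int (y div p div p ^ i mod p))"
    have "int (Fv p m d (\<rho> (1 # w, y))) = ((dg p (m - 1) V + d (Suc n) * int (y mod p)) mod int p + S) mod int p"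
      unfolding r FR[OF p m1] V S_def by (simp only: w(1))
    also have "\<dots> = (dg p (m - 1) V + d (Suc n) * int (y mod p) + S) mod int p"
      by (simp add: mod_add_left_eq)
    also have "\<dots> = (dg p (m - 1) V + (d (Suc n) mod int p) * int (y mod p) + S) mod int p"
    proof -
      have "dg p (m - 1) V + d (Suc n) * int (y mod p) + S =
          (dg p (m - 1) V + (d (Suc n) mod int p) * int (y mod p) + S) + (d (Suc n) div int p * int (y mod p)) * int p"
        by (rule aux_modsplit)
      then show ?thesis by (simp only: mod_mult_self1)
    qed
    also have "\<dots> = (dg p (m - 1) V + (c 0 mod int p) * int (y mod p) + S) mod int p"
      using cd(3) by simp
    also have "\<dots> = int (Fv p (Suc m) c (1 # w, y))"
      unfolding FL[OF p m1 w(2)[unfolded w(1)[symmetric]]] V_def S_def ..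
    finally show ?thesis by simp
  qed
  have memL': "\<exists>w y. x = (1 # w, y) \<and> length w = n \<and> (\<forall>k<n. p dvd w ! k)" if "x \<in> set (coords p ts)" for x
  proof -
    obtain z y where az: "x = (z, y)" by (cases x)
    have "(z, y) \<in> set (coords p ts)" using that az by simp
    then obtain w where a: "z = 1 # w" "length w = n" "\<forall>k<n. w ! k \<in> set (Bl ! k)"
      unfolding memL by blast
    have "\<forall>k<n. p dvd w ! k"
    proof (intro allI impI)
      fix k assume "k < n"
      then have "w ! k = f (w ! k) * p" using mult a(3) by blast
      then show "p dvd w ! k" by (metis dvd_triv_right)
    qed
    then show ?thesis using az a by blast
  qed
  have eqv: "perm_equiv (length (coords p ts)) (range (\<lambda>c. map (Fv p (Suc m) c) (coords p ts)))
      (range (\<lambda>d. map (Fv p m d) (coords p (red ts))))"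
  proof (rule coord_equiv[OF coords_distinct[OF p] coords_distinct[OF p] bij refl])
    fix c :: "nat \<Rightarrow> int"
    define d where "d = c(0 := c 0 div int p, Suc n := c 0 mod int p)"
    have "\<forall>x\<in>set (coords p ts). Fv p m d (\<rho> x) = Fv p (Suc m) c x"
    proof
      fix x assume "x \<in> set (coords p ts)"
      then obtain w y where x: "x = (1 # w, y)" "length w = n" "\<forall>k<n. p dvd w ! k" using memL' by blast
      show "Fv p m d (\<rho> x) = Fv p (Suc m) c x" unfolding x(1)
        by (rule key[OF x(2,3)]) (simp_all add: d_def p)
    qed
    then show "\<exists>d. \<forall>x\<in>set (coords p ts). Fv p m d (\<rho> x) = Fv p (Suc m) c x" by blast
  next
    fix d :: "nat \<Rightarrow> int"
    define c where "c = d(0 := d 0 * int p + d (Suc n) mod int p)"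
    have "\<forall>x\<in>set (coords p ts). Fv p m d (\<rho> x) = Fv p (Suc m) c x"
    proof
      fix x assume "x \<in> set (coords p ts)"
      then obtain w y where x: "x = (1 # w, y)" "length w = n" "\<forall>k<n. p dvd w ! k" using memL' by blast
      have c0: "c 0 div int p = d 0" "c 0 mod int p = d (Suc n) mod int p"
        unfolding c_def using p by simp_all
      show "Fv p m d (\<rho> x) = Fv p (Suc m) c x" unfolding x(1)
        by (rule key[OF x(2,3)]) (simp_all add: c0, simp add: c_def)
    qed
    then show "\<exists>c. \<forall>x\<in>set (coords p ts). Fv p m d (\<rho> x) = Fv p (Suc m) c x" by blast
  qed
  show ?thesis using eqv unfolding GH_code_rep lr sm .
qed



lemma prod_list_concat_nat: "prod_list (concat xss) = prod_list (map prod_list (xss :: nat list list))"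
  by (induction xss) auto

lemma length_coords:
  assumes "ts ! 0 \<ge> 1" "length ts \<ge> 1"
  shows "length (coords p ts) = p ^ GH_t ts"
proof -
  define s where "s = length ts"
  define k where "k = (\<lambda>i. if i = 0 then ts ! 0 - 1 else ts ! i)"
  have lc: "length (coords p ts) = length (GH_columns p ts) * p ^ (s - 1)"
    unfolding coords_def s_def by (simp add: length_concat comp_def sum_list_triv)
  have "length (GH_columns p ts) = prod_list (map length (blocks p ts))"
    unfolding GH_columns_blocks by (simp add: length_product_lists prod_list.eq_foldr)
  also have "map length (blocks p ts) = concat (map (\<lambda>i. replicate (k i) (p ^ (s - i))) [0..<s])"
  proof -
    have e: "p * p ^ (length ts - Suc x) = p ^ (length ts - x)" if "x < length ts" for x
      by (metis Suc_diff_Suc power_Suc that)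
    show ?thesis unfolding blocks_def k_def s_def
      apply (simp add: map_concat comp_def T_list_def)
      apply (intro arg_cong[where f=concat] map_cong refl)
      using e by simp
  qed
  also have "prod_list \<dots> = (\<Prod>i<s. (p ^ (s - i)) ^ k i)"
  proof -
    have "prod_list (concat (map (\<lambda>i. replicate (k i) (p ^ (s - i))) [0..<s])) = prod_list (map (\<lambda>i. (p ^ (s - i)) ^ k i) [0..<s])"
      by (simp add: prod_list_concat_nat comp_def)
    also have "\<dots> = (\<Prod>i<s. (p ^ (s - i)) ^ k i)"
      unfolding atLeast0LessThan[symmetric] by (metis distinct_upt prod.distinct_set_conv_list set_upt)
    finally show ?thesis .
  qed
  also have "\<dots> = p ^ (\<Sum>i<s. (s - i) * k i)" by (simp add: power_mult[symmetric] power_sum)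
  finally have l1: "length (GH_columns p ts) = p ^ (\<Sum>i<s. (s - i) * k i)" .
  have s1: "s \<ge> 1" using assms(2) unfolding s_def by simp
  obtain r where r: "s = Suc r" using s1 by (cases s) auto
  have "(\<Sum>i<s. (s - i) * ts ! i) = (\<Sum>i<s. (s - i) * k i) + s"
  proof -
    have "(\<Sum>i<s. (s - i) * ts ! i) = s * ts ! 0 + (\<Sum>i<r. (s - Suc i) * ts ! Suc i)"
      unfolding r by (simp add: sum.lessThan_Suc_shift del: sum.lessThan_Suc)
    moreover have "(\<Sum>i<s. (s - i) * k i) = s * (ts ! 0 - 1) + (\<Sum>i<r. (s - Suc i) * ts ! Suc i)"
      unfolding r by (simp add: sum.lessThan_Suc_shift k_def del: sum.lessThan_Suc)
    moreover have "s * ts ! 0 = s * (ts ! 0 - 1) + s" using assms(1)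
      by (metis add.commute le_add_diff_inverse mult_Suc_right plus_1_eq_Suc)
    ultimately show ?thesis by simp
  qed
  then have "GH_t ts = (\<Sum>i<s. (s - i) * k i) + (s - 1)" unfolding GH_t_def s_def[symmetric] using s1 by simp
  then show ?thesis unfolding lc l1 by (simp add: power_add)
qed

lemma GH_code_vecs:
  assumes "p > 0" "ts ! 0 \<ge> 1" "length ts \<ge> 1"
  shows "GH_code p ts \<subseteq> vecs p (p ^ GH_t ts)"
  unfolding GH_code_rep vecs_def using length_coords[OF assms(2,3)] assms(1)
  by (auto simp: Fv_def Let_def split: prod.splits)

lemma red_props:
  assumes "length ts \<ge> 2" "ts ! 0 = 1"
  shows "length (red ts) = length ts - 1" "red ts ! 0 \<ge> 1" "GH_t (red ts) = GH_t ts"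
proof -
  define m where "m = length ts - 1"
  have m1: "m \<ge> 1" and sm: "length ts = Suc m" using assms(1) unfolding m_def by auto
  show lr: "length (red ts) = length ts - 1" unfolding red_def by simp
  show "red ts ! 0 \<ge> 1" unfolding red_def using m1 sm by simp
  have rn: "red ts ! i = ts ! Suc i + (if i = 0 then 1 else 0) + (if i = m - 1 then 1 else 0)" if "i < m" for i
    using that unfolding red_def m_def by (simp add: numeral_2_eq_2)
  have "(\<Sum>i<m. (m - i) * red ts ! i) = (\<Sum>i<m. (m - i) * ts ! Suc i + (m - i) * (if i = 0 then 1 else 0)
         + (m - i) * (if i = m - 1 then 1 else 0))"
    using rn by (intro sum.cong refl) (simp add: distrib_left)
  also have "\<dots> = (\<Sum>i<m. (m - i) * ts ! Suc i) + m + 1"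
    using m1 by (simp add: sum.distrib if_distrib[of "\<lambda>x. _ * x"] sum.delta' cong: if_cong)
  finally have a: "(\<Sum>i<m. (m - i) * red ts ! i) = (\<Sum>i<m. (m - i) * ts ! Suc i) + m + 1" .
  have b: "(\<Sum>i<length ts. (length ts - i) * ts ! i) = Suc m + (\<Sum>i<m. (m - i) * ts ! Suc i)"
    unfolding sm using assms(2) by (simp add: sum.lessThan_Suc_shift del: sum.lessThan_Suc)
  show "GH_t (red ts) = GH_t ts" unfolding GH_t_def lr using a b sm by simp
qed



lemma Fv1:
  assumes "p > 0"
  shows "int (Fv p 1 c x) = (\<Sum>k<length (fst x). c k * int (fst x ! k)) mod int p"
proof -
  obtain z y where x: "x = (z, y)" by (cases x)
  show ?thesis unfolding x using Fv_int[OF assms, of 1 c z y] by (simp add: dg_def)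
qed

lemma linear_s1:
  assumes p: "p > 0" and l: "length ts = 1" and t0: "ts ! 0 \<ge> 1"
  shows "linear_code p (p ^ GH_t ts) (GH_code p ts)"
proof -
  define L where "L = coords p ts"
  define N where "N = p ^ GH_t ts"
  have lL: "length L = N" unfolding L_def N_def using length_coords[OF t0] l by simp
  define X where "X = (\<lambda>c (x :: nat list \<times> nat). (\<Sum>k<length (fst x). c k * int (fst x ! k)))"
  have C: "GH_code p ts = range (\<lambda>c. map (Fv p 1 c) L)" unfolding GH_code_rep L_def l ..
  have F: "int (Fv p 1 c x) = X c x mod int p" for c x unfolding X_def using Fv1[OF p] .
  show ?thesis unfolding linear_code_def N_def[symmetric]
  proof (intro conjI ballI allI impI)
    show "GH_code p ts \<subseteq> vecs p N" unfolding N_def using GH_code_vecs[OF p t0] l by simp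
    have "map (Fv p 1 (\<lambda>_. 0)) L = replicate N 0"
    proof (rule nth_equalityI)
      fix i assume "i < length (map (Fv p 1 (\<lambda>_. 0)) L)"
      have "int (Fv p 1 (\<lambda>_. 0) (L ! i)) = 0" unfolding F X_def by simp
      then show "map (Fv p 1 (\<lambda>_. 0)) L ! i = replicate N 0 ! i"
        using \<open>i < _\<close> lL by simp
    qed (simp add: lL)
    then show "replicate N 0 \<in> GH_code p ts" unfolding C by (metis rangeI)
  next
    fix x y assume "x \<in> GH_code p ts" "y \<in> GH_code p ts"
    then obtain c d where xy: "x = map (Fv p 1 c) L" "y = map (Fv p 1 d) L" unfolding C by blast
    have "map2 (\<lambda>a b. (a + b) mod p) x y = map (Fv p 1 (\<lambda>k. c k + d k)) L"
    proof (rule nth_equalityI)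
      fix i assume "i < length (map2 (\<lambda>a b. (a + b) mod p) x y)"
      then have i: "i < length L" using xy by simp
      have Xs: "X (\<lambda>k. c k + d k) (L ! i) = X c (L ! i) + X d (L ! i)"
        unfolding X_def by (simp add: sum.distrib distrib_right)
      have "int ((Fv p 1 c (L ! i) + Fv p 1 d (L ! i)) mod p) = int (Fv p 1 (\<lambda>k. c k + d k) (L ! i))"
        unfolding of_nat_mod of_nat_add F Xs by (simp add: mod_add_eq)
      then show "map2 (\<lambda>a b. (a + b) mod p) x y ! i = map (Fv p 1 (\<lambda>k. c k + d k)) L ! i"
        using i xy by simp
    qed (simp add: xy)
    then show "map2 (\<lambda>a b. (a + b) mod p) x y \<in> GH_code p ts" unfolding C by (metis rangeI)
  next
    fix k x assume "k < p" "x \<in> GH_code p ts"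
    then obtain c where xc: "x = map (Fv p 1 c) L" unfolding C by blast
    have "map (\<lambda>a. k * a mod p) x = map (Fv p 1 (\<lambda>j. int k * c j)) L"
    proof (rule nth_equalityI)
      fix i assume "i < length (map (\<lambda>a. k * a mod p) x)"
      then have i: "i < length L" using xc by simp
      have Xs: "X (\<lambda>j. int k * c j) (L ! i) = int k * X c (L ! i)"
        unfolding X_def by (simp add: sum_distrib_left mult.assoc)
      have "int (k * Fv p 1 c (L ! i) mod p) = int (Fv p 1 (\<lambda>j. int k * c j) (L ! i))"
        unfolding of_nat_mod of_nat_mult F Xs by (simp add: mod_mult_right_eq)
      then show "map (\<lambda>a. k * a mod p) x ! i = map (Fv p 1 (\<lambda>j. int k * c j)) L ! i"
        using i xc by simp
    qed (simp add: xc)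
    then show "map (\<lambda>a. k * a mod p) x \<in> GH_code p ts" unfolding C by (metis rangeI)
  qed
qed

lemma perm_equiv_refl:
  assumes "C \<subseteq> vecs p N"
  shows "perm_equiv N C C"
proof -
  have "perm_img N id c = c" if "c \<in> C" for c
    using assms that unfolding perm_img_def vecs_def by (auto intro!: nth_equalityI)
  then have "perm_img N id ` C = C" by force
  then show ?thesis unfolding perm_equiv_def by (metis bij_betw_id id_apply)
qed

lemma reduce:
  assumes p: "p > 0"
  shows "\<And>ts. length ts = s0 + n \<Longrightarrow> ts ! 0 \<ge> 1 \<Longrightarrow> GH_t ts = t \<Longrightarrow> t + 1 < 2 * (s0 + 1) \<Longrightarrow> s0 \<ge> 1 \<Longrightarrow>
    \<exists>ts'. length ts' = s0 \<and> ts' ! 0 \<ge> 1 \<and> GH_t ts' = t \<and> perm_equiv (p ^ t) (GH_code p ts) (GH_code p ts')"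
proof (induction n)
  case 0
  then show ?case using perm_equiv_refl[OF GH_code_vecs[OF p]] by auto
next
  case (Suc n)
  define s where "s = length ts"
  have s2: "s \<ge> 2" using Suc.prems unfolding s_def by simp
  have t0: "ts ! 0 = 1"
  proof (rule ccontr)
    assume "ts ! 0 \<noteq> 1"
    then have "ts ! 0 \<ge> 2" using Suc.prems(2) by simp
    define S where "S = (\<Sum>i<s. (s - i) * ts ! i)"
    have "s * ts ! 0 \<le> S"
      using member_le_sum[of 0 "{..<s}" "\<lambda>i. (s - i) * ts ! i"] s2 unfolding S_def by simp
    moreover have "s * 2 \<le> s * ts ! 0" using \<open>ts ! 0 \<ge> 2\<close> by (rule mult_le_mono2)
    ultimately have a: "2 * s \<le> S" by linarith
    have b: "t = S - 1" using Suc.prems(3) unfolding GH_t_def S_def s_def by simp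
    have c: "s = s0 + Suc n" using Suc.prems(1) s_def by simp
    show False using a b c Suc.prems(4) by arith
  qed
  have l2: "length ts \<ge> 2" using s2 s_def by simp
  note rp = red_props[OF l2 t0]
  have "length (red ts) = s0 + n" using rp(1) Suc.prems(1) by simp
  then obtain ts' where ts': "length ts' = s0" "ts' ! 0 \<ge> 1" "GH_t ts' = t"
    "perm_equiv (p ^ t) (GH_code p (red ts)) (GH_code p ts')"
    using Suc.IH[of "red ts"] rp(2,3) Suc.prems(3,4,5) by auto
  have "perm_equiv (p ^ t) (GH_code p ts) (GH_code p (red ts))"
    using step[OF p l2 t0] length_coords[of ts p] Suc.prems(2,3) l2 by simp
  then show ?case using ts' perm_equiv_trans by blast
qed

theorem corollary6:
  fixes p :: nat and ts :: "nat list"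
  assumes "prime p"
    and "length ts \<ge> 1" and "ts ! 0 \<ge> 1"
    and "GH_t ts \<ge> 1"
    and "\<not> linear_code p (p ^ GH_t ts) (GH_code p ts)"
    and "length ts \<in> {(GH_t ts + 1) div 2 + 1 .. GH_t ts + 1}"
  shows "\<exists>ts'. length ts' \<in> {2 .. (GH_t ts + 1) div 2} \<and> ts' ! 0 \<ge> 1
           \<and> GH_t ts' = GH_t ts
           \<and> equivalent_codes p (p ^ GH_t ts) (GH_code p ts) (GH_code p ts')"
proof -
  have p: "p > 0" using assms(1) prime_gt_0_nat by blast
  define t where "t = GH_t ts"
  define s0 where "s0 = (t + 1) div 2"
  have s01: "s0 \<ge> 1" using assms(4) unfolding s0_def t_def by simp
  have lt: "t + 1 < 2 * (s0 + 1)" unfolding s0_def by simp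
  have len: "length ts = s0 + (length ts - s0)" using assms(6) unfolding s0_def t_def by simp
  obtain ts' where ts': "length ts' = s0" "ts' ! 0 \<ge> 1" "GH_t ts' = t"
    "perm_equiv (p ^ t) (GH_code p ts) (GH_code p ts')"
    using reduce[OF p len assms(3) t_def[symmetric] lt s01] by blast
  have V: "GH_code p ts \<subseteq> vecs p (p ^ t)" using GH_code_vecs[OF p assms(3,2)] unfolding t_def .
  show ?thesis
  proof (cases "s0 \<ge> 2")
    case True
    then show ?thesis using ts' perm_equiv_equivalent[OF ts'(4) V p] unfolding s0_def t_def
      by (intro exI[of _ ts']) auto
  next
    case False
    then have "length ts' = 1" using ts'(1) s01 by simp
    then have "linear_code p (p ^ t) (GH_code p ts')" using linear_s1[OF p _ ts'(2)] ts'(3) by simp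
    then have "linear_code p (p ^ t) (GH_code p ts)" using perm_equiv_linear[OF ts'(4) _ V p] by simp
    then show ?thesis using assms(5) unfolding t_def by simp
  qed
qed

end
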